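(* Let $u,v:\mathbb{C}\to\mathbb{R}$ be harmonic, $f=u+iv$, $\mathcal{R}_f=f(\mathbb{C})$, and suppose $\mathcal{D}(\mathcal{R}_f)\subset\{e^{i\theta}: -\pi\le\theta\le0\}$. For $t\in\mathbb{R}$ let $E_t=\{s\in\mathbb{R}: t+is\in\mathcal{R}_f\}$ and $\Phi(t)=\max\{\sup E_t,\,0\}$ (with $\sup\varnothing=-\infty$). Then each $E_t$ is bounded above, so $\Phi:\mathbb{R}\to[0,+\infty)$ is well defined; moreover $\Phi$ is locally bounded and $\lim_{|t|\to\infty}\Phi(t)/|t|=0$.
   Context: $\partial\mathbb{D}$ is the unit circle. For $\mathcal{R}\subset\mathbb{C}$, $e^{i\theta}\in\partial\mathbb{D}$ is an asymptotic direction of $\mathcal{R}$ if there exist $w_n\in\mathcal{R}$ and $\varepsilon_n>0$, $\varepsilon_n\to0$, with $\varepsilon_n w_n\to e^{i\theta}$; $\mathcal{D}(\mathcal{R})$ is the set of asymptotic directions. *)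

theory Defs
  imports "HOL-Analysis.Analysis"
begin

definition has_partial_x :: "(complex \<Rightarrow> real) \<Rightarrow> complex \<Rightarrow> real \<Rightarrow> bool" where
  "has_partial_x u z d \<longleftrightarrow> ((\<lambda>t::real. u (z + complex_of_real t)) has_real_derivative d) (at 0)"

definition has_partial_y :: "(complex \<Rightarrow> real) \<Rightarrow> complex \<Rightarrow> real \<Rightarrow> bool" where
  "has_partial_y u z d \<longleftrightarrow> ((\<lambda>t::real. u (z + complex_of_real t * \<i>)) has_real_derivative d) (at 0)"

definition harmonic_C :: "(complex \<Rightarrow> real) \<Rightarrow> bool" where
  "harmonic_C u \<longleftrightarrow> continuous_on UNIV u \<and>
     (\<exists>ux uy uxx uxy uyx uyy.
        (\<forall>z. has_partial_x u z (ux z) \<and> has_partial_y u z (uy z) \<and>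
             has_partial_x ux z (uxx z) \<and> has_partial_y ux z (uxy z) \<and>
             has_partial_x uy z (uyx z) \<and> has_partial_y uy z (uyy z)) \<and>
        continuous_on UNIV ux \<and> continuous_on UNIV uy \<and>
        continuous_on UNIV uxx \<and> continuous_on UNIV uxy \<and>
        continuous_on UNIV uyx \<and> continuous_on UNIV uyy \<and>
        (\<forall>z. uxx z + uyy z = 0))"

definition asymp_dirs :: "complex set \<Rightarrow> complex set" where
  "asymp_dirs R = {w. norm w = 1 \<and>
     (\<exists>(ws :: nat \<Rightarrow> complex) (eps :: nat \<Rightarrow> real).
        (\<forall>n. ws n \<in> R \<and> eps n > 0) \<and> eps \<longlonglongrightarrow> 0 \<and>
        (\<lambda>n. complex_of_real (eps n) * ws n) \<longlonglongrightarrow> w)}"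

definition vsection :: "complex set \<Rightarrow> real \<Rightarrow> real set" where
  "vsection R t = {s. Complex t s \<in> R}"

definition Phi :: "complex set \<Rightarrow> real \<Rightarrow> real" where
  "Phi R t = (if vsection R t = {} then 0 else max (Sup (vsection R t)) 0)"

end

theory Submission
  imports Defs
begin

lemma key_bound:
  fixes R :: "complex set" and c :: real
  assumes A: "asymp_dirs R \<subseteq> {cis \<theta> | \<theta>. - pi \<le> \<theta> \<and> \<theta> \<le> 0}" and c: "c > 0"
  shows "\<exists>M. \<forall>w\<in>R. Im w \<ge> c * norm w \<longrightarrow> norm w \<le> M"
proof (rule ccontr)
  assume "\<not> ?thesis"
  then have "\<forall>n::nat. \<exists>w. w \<in> R \<and> Im w \<ge> c * norm w \<and> norm w > real n + 1"
    by (meson not_le)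
  then obtain w where w: "\<And>n. w n \<in> R" "\<And>n. Im (w n) \<ge> c * norm (w n)"
      "\<And>n. norm (w n) > real n + 1"
    by metis
  have wpos: "norm (w n) > 0" for n using w(3)[of n] by linarith
  define z where "z n = w n / complex_of_real (norm (w n))" for n
  have zS: "z n \<in> sphere 0 1" for n
    using wpos[of n] by (simp add: z_def norm_divide)
  have zIm: "Im (z n) \<ge> c" for n
    using w(2)[of n] wpos[of n] by (simp add: z_def Im_divide_of_real pos_le_divide_eq)
  obtain l r where l: "l \<in> sphere 0 1" "strict_mono (r :: nat \<Rightarrow> nat)" "(z \<circ> r) \<longlonglongrightarrow> l"
    using seq_compactE[OF compact_imp_seq_compact[OF compact_sphere] ] zS by metis
  define eps where "eps n = 1 / norm (w (r n))" for n
  have epsp: "eps n > 0" for n using wpos by (simp add: eps_def)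
  have eps0: "eps \<longlonglongrightarrow> 0"
  proof -
    have b: "norm (eps n) \<le> 1 / real (Suc n)" for n
    proof -
      have "real n \<le> real (r n)" using seq_suble[OF l(2)] by simp
      then have "real n + 1 \<le> norm (w (r n))" using w(3)[of "r n"] by linarith
      then show ?thesis using epsp[of n] by (simp add: eps_def frac_le)
    qed
    have e: "\<forall>\<^sub>F n in sequentially. norm (eps n) \<le> 1 / real (Suc n)"
      using b by simp
    show ?thesis
      by (rule Lim_null_comparison[OF e LIMSEQ_inverse_real_of_nat[unfolded inverse_eq_divide]])
  qed
  have "(\<lambda>n. complex_of_real (eps n) * w (r n)) = z \<circ> r"
    by (auto simp: eps_def z_def field_simps)
  then have "l \<in> asymp_dirs R"
    unfolding asymp_dirs_def using l zS epsp eps0 w(1)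
    by (intro CollectI conjI exI[of _ "\<lambda>n. w (r n)"] exI[of _ eps]) auto
  then obtain \<theta> where th: "l = cis \<theta>" "- pi \<le> \<theta>" "\<theta> \<le> 0" using A by auto
  have "sin (- \<theta>) \<ge> 0" using th by (intro sin_ge_zero) auto
  then have "Im l \<le> 0" using th by simp
  moreover have "Im l \<ge> c"
    using tendsto_Im[OF l(3)] zIm by (intro LIMSEQ_le_const) (auto simp: o_def)
  ultimately show False using c by linarith
qed

lemma key_bound2:
  fixes R :: "complex set" and e :: real
  assumes A: "asymp_dirs R \<subseteq> {cis \<theta> | \<theta>. - pi \<le> \<theta> \<and> \<theta> \<le> 0}" and e: "e > 0"
  shows "\<exists>M\<ge>0. \<forall>t y. Complex t y \<in> R \<longrightarrow> y \<le> max (e * \<bar>t\<bar>) M"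
proof -
  have c: "e / (1 + e) > 0" using e by simp
  obtain M where M: "\<And>w. w \<in> R \<Longrightarrow> Im w \<ge> e / (1 + e) * norm w \<Longrightarrow> norm w \<le> M"
    using key_bound[OF A c] by blast
  have "\<forall>t y. Complex t y \<in> R \<longrightarrow> y \<le> max (e * \<bar>t\<bar>) (max M 0)"
  proof (intro allI impI)
    fix t y assume R: "Complex t y \<in> R"
    show "y \<le> max (e * \<bar>t\<bar>) (max M 0)"
    proof (cases "y \<le> e * \<bar>t\<bar>")
      case True then show ?thesis by simp
    next
      case False
      then have yp: "y > 0" using e by (smt (verit) abs_ge_zero mult_nonneg_nonneg)
      have n: "norm (Complex t y) \<le> \<bar>t\<bar> + y"
        using cmod_le[of "Complex t y"] yp by simp
      have "\<bar>t\<bar> < y / e" using False e by (simp add: pos_less_divide_eq mult.commute)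
      then have "norm (Complex t y) \<le> y / e + y" using n by linarith
      also have "... = y * (1 + e) / e" using e by (simp add: field_simps)
      finally have "e / (1 + e) * norm (Complex t y) \<le> y"
        using e by (simp add: field_simps)
      then have "norm (Complex t y) \<le> M" using M[OF R] by simp
      moreover have "y \<le> norm (Complex t y)" using abs_Im_le_cmod[of "Complex t y"] by simp
      ultimately show ?thesis by simp
    qed
  qed
  then show ?thesis by (intro exI[of _ "max M 0"]) auto
qed

lemma Phi_le:
  assumes "\<And>y. y \<in> vsection R t \<Longrightarrow> y \<le> K" "K \<ge> 0"
  shows "Phi R t \<le> K"
  using assms unfolding Phi_def by (auto intro: cSup_least)

theorem lemma6:
  fixes u v :: "complex \<Rightarrow> real"
  assumes "harmonic_C u" and "harmonic_C v"
    and "asymp_dirs (range (\<lambda>z. Complex (u z) (v z))) \<subseteq> {cis \<theta> | \<theta>. - pi \<le> \<theta> \<and> \<theta> \<le> 0}"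
  shows "(\<forall>t. bdd_above (vsection (range (\<lambda>z. Complex (u z) (v z))) t))
    \<and> (\<forall>t. \<exists>e>0. \<exists>B. \<forall>s. \<bar>s - t\<bar> < e \<longrightarrow> Phi (range (\<lambda>z. Complex (u z) (v z))) s \<le> B)
    \<and> ((\<lambda>t. Phi (range (\<lambda>z. Complex (u z) (v z))) t / \<bar>t\<bar>) \<longlongrightarrow> 0) at_infinity"
proof -
  define R where "R = range (\<lambda>z. Complex (u z) (v z))"
  have A: "asymp_dirs R \<subseteq> {cis \<theta> | \<theta>. - pi \<le> \<theta> \<and> \<theta> \<le> 0}" using assms(3) R_def by simp
  obtain M1 where M1: "M1 \<ge> 0" "\<And>t y. Complex t y \<in> R \<Longrightarrow> y \<le> max (1 * \<bar>t\<bar>) M1"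
    using key_bound2[OF A, of 1] by auto
  have P1: "\<forall>t. bdd_above (vsection R t)"
    using M1 unfolding vsection_def bdd_above_def by blast
  have P2: "\<forall>t. \<exists>e>0. \<exists>B. \<forall>s. \<bar>s - t\<bar> < e \<longrightarrow> Phi R s \<le> B"
  proof (intro allI)
    fix t :: real
    have "\<forall>s. \<bar>s - t\<bar> < 1 \<longrightarrow> Phi R s \<le> max (\<bar>t\<bar> + 1) M1"
    proof (intro allI impI)
      fix s :: real assume st: "\<bar>s - t\<bar> < 1"
      show "Phi R s \<le> max (\<bar>t\<bar> + 1) M1"
      proof (rule Phi_le)
        fix y assume "y \<in> vsection R s"
        then have "y \<le> max (1 * \<bar>s\<bar>) M1" using M1 by (auto simp: vsection_def)
        then show "y \<le> max (\<bar>t\<bar> + 1) M1" using st by auto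
      qed auto
    qed
    then show "\<exists>e>0. \<exists>B. \<forall>s. \<bar>s - t\<bar> < e \<longrightarrow> Phi R s \<le> B"
      by (intro exI[of _ "1::real"]) auto
  qed
  have P3: "((\<lambda>t. Phi R t / \<bar>t\<bar>) \<longlongrightarrow> 0) at_infinity"
    unfolding Lim_at_infinity
  proof (intro allI impI)
    fix e :: real assume e: "e > 0"
    obtain M where M: "M \<ge> 0" "\<And>t y. Complex t y \<in> R \<Longrightarrow> y \<le> max (e / 2 * \<bar>t\<bar>) M"
      using key_bound2[OF A, of "e/2"] e by auto
    show "\<exists>b. \<forall>x. b \<le> norm x \<longrightarrow> dist (Phi R x / \<bar>x\<bar>) 0 < e"
    proof (intro exI[of _ "2 * M / e + 1"] allI impI)
      fix x :: real assume x: "2 * M / e + 1 \<le> norm x"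
      have xp: "\<bar>x\<bar> > 0" using x M e by (smt (verit) divide_nonneg_pos real_norm_def)
      have "M \<le> e / 2 * \<bar>x\<bar>"
      proof -
        have "2 * M / e \<le> \<bar>x\<bar>" using x by simp
        then show ?thesis using e by (simp add: field_simps)
      qed
      then have "Phi R x \<le> e / 2 * \<bar>x\<bar>"
      proof (intro Phi_le)
        fix y assume Mx: "M \<le> e / 2 * \<bar>x\<bar>" and "y \<in> vsection R x"
        then have "Complex x y \<in> R" by (simp add: vsection_def)
        then have "y \<le> max (e / 2 * \<bar>x\<bar>) M" by (rule M(2))
        then show "y \<le> e / 2 * \<bar>x\<bar>" using Mx by linarith
      next
        show "0 \<le> e / 2 * \<bar>x\<bar>" using e by simp
      qed
      moreover have "Phi R x \<ge> 0" unfolding Phi_def by auto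
      ultimately have "\<bar>Phi R x / \<bar>x\<bar>\<bar> \<le> e / 2"
        using xp by (simp add: divide_le_eq abs_div_pos)
      then show "dist (Phi R x / \<bar>x\<bar>) 0 < e" using e unfolding dist_real_def by linarith
    qed
  qed
  show ?thesis using P1 P2 P3 unfolding R_def by blast
qed

end
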